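(* Let $\#\mathcal A(k)$ denote the number of $\alpha$-trees of length $k$. Then $\#\mathcal A(0)=1$ and for every $k\ge1$ $$\#\mathcal A(k)=\#\mathcal A(k-1)\cdot\sum_{i=0}^{k-1}\#\mathcal A(i).$$ In particular $\#\mathcal A(1)=1$, $\#\mathcal A(2)=2$, $\#\mathcal A(3)=8$, $\#\mathcal A(4)=96$.
   Context: All trees are finite rooted plane trees: the children of each node are linearly ordered (from "lowest" to "highest"), and for two children $a,b$ of the same node, $b$ lies above $a$ if $b$ comes later in this order. The length of a tree is the maximal distance of a node from the root (a single node has length 0). For a node $a$ of $T$, $T(a)$ is the maximal subtree of $T$ with root $a$. An $\alpha$-tree is a rooted plane tree such that whenever two nodes $a,b$ have the same parent and $b$ lies above $a$, the subtree $T(b)$ has strictly smaller length than $T(a)$. Trees are counted up to isomorphism of rooted plane trees. *)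

theory Defs
  imports Main
begin

text \<open>Finite rooted plane trees up to isomorphism: a node with an ordered list of
children (from lowest to highest).\<close>
datatype ptree = Node "ptree list"

fun len :: "ptree \<Rightarrow> nat" where
  "len (Node ts) = (if ts = [] then 0 else Suc (Max (set (map len ts))))"

text \<open>alpha-tree: for siblings a, b with b above a (later in the list),
len T(b) < len T(a); this holds at every node.\<close>
fun alpha_tree :: "ptree \<Rightarrow> bool" where
  "alpha_tree (Node ts) =
     ((\<forall>i j. i < j \<and> j < length ts \<longrightarrow> len (ts ! j) < len (ts ! i))
      \<and> (\<forall>t\<in>set ts. alpha_tree t))"

definition numA :: "nat \<Rightarrow> nat" where
  "numA k = card {t. alpha_tree t \<and> len t = k}"

end

theory Submission
  imports Defs
begin

definition S :: "nat \<Rightarrow> ptree set" where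
  "S k = {t. alpha_tree t \<and> len t = k}"

lemma len_alt: "len (Node rs) = (if rs = [] then 0 else Suc (Max (len ` set rs)))"
  by simp

declare len.simps[simp del]

lemma lenle: "len (Node rs) \<le> n \<longleftrightarrow> (\<forall>y\<in>set rs. len y < n)"
proof (cases "rs = []")
  case True then show ?thesis by (simp add: len_alt)
next
  case False
  then have "len (Node rs) = Suc (Max (len ` set rs))" by (simp add: len_alt)
  moreover have "Max (len ` set rs) < n \<longleftrightarrow> (\<forall>y\<in>set rs. len y < n)"
    using False by (subst Max_less_iff) auto
  ultimately show ?thesis by (simp add: Suc_le_eq)
qed

lemma alpha_iff: "alpha_tree (Node ts) \<longleftrightarrow>
   sorted_wrt (\<lambda>a b. len b < len a) ts \<and> (\<forall>t\<in>set ts. alpha_tree t)"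
  by (simp add: sorted_wrt_iff_nth_less) meson

declare alpha_tree.simps[simp del]

lemma alpha_cons: "alpha_tree (Node (t#rs)) \<longleftrightarrow>
   alpha_tree t \<and> alpha_tree (Node rs) \<and> len (Node rs) \<le> len t"
  unfolding alpha_iff lenle by auto

lemma len_cons: "len (Node rs) \<le> len t \<Longrightarrow> len (Node (t#rs)) = Suc (len t)"
proof -
  assume "len (Node rs) \<le> len t"
  then have a: "\<forall>y\<in>set rs. len y < len t" by (simp add: lenle)
  have "Max (len ` set (t#rs)) = len t"
    by (rule Max_eqI) (use a in auto)
  then show ?thesis by (simp add: len_alt)
qed

lemma S0: "S 0 = {Node []}"
proof (rule set_eqI)
  fix x
  obtain ts where x: "x = Node ts" by (cases x)
  have a0: "alpha_tree (Node [])" by (simp add: alpha_iff)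
  have l0: "len (Node []) = 0" by (simp add: len_alt)
  show "x \<in> S 0 \<longleftrightarrow> x \<in> {Node []}"
  proof
    assume "x \<in> S 0"
    then have "len (Node ts) = 0" using x by (simp add: S_def)
    then have "ts = []" by (simp add: len_alt split: if_splits)
    then show "x \<in> {Node []}" using x by simp
  next
    assume "x \<in> {Node []}"
    then show "x \<in> S 0" using a0 l0 by (simp add: S_def)
  qed
qed

definition f :: "ptree \<times> ptree \<Rightarrow> ptree" where
  "f p = (case snd p of Node rs \<Rightarrow> Node (fst p # rs))"

lemma f_inj: "inj f"
proof (rule injI)
  fix p q assume "f p = f q"
  then show "p = q" unfolding f_def
    by (cases p; cases q; rename_tac a b c d; case_tac b; case_tac d) auto
qed

lemma S_Suc: "S (Suc m) = f ` (S m \<times> (\<Union>i\<le>m. S i))"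
proof (rule set_eqI)
  fix x
  show "x \<in> S (Suc m) \<longleftrightarrow> x \<in> f ` (S m \<times> (\<Union>i\<le>m. S i))"
  proof
    assume x: "x \<in> S (Suc m)"
    obtain ts where xt: "x = Node ts" by (cases x)
    with x have "ts \<noteq> []" unfolding S_def by (auto simp: len_alt)
    then obtain t rs where ts: "ts = t # rs" by (cases ts) auto
    from x xt ts have al: "alpha_tree t" "alpha_tree (Node rs)" "len (Node rs) \<le> len t"
      and l: "len (Node (t#rs)) = Suc m"
      using alpha_cons[of t rs] unfolding S_def by auto
    from l len_cons[OF al(3)] have "len t = m" by simp
    then have "(t, Node rs) \<in> S m \<times> (\<Union>i\<le>m. S i)" using al unfolding S_def by auto
    moreover have "x = f (t, Node rs)" using xt ts by (simp add: f_def)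
    ultimately show "x \<in> f ` (S m \<times> (\<Union>i\<le>m. S i))" by blast
  next
    assume "x \<in> f ` (S m \<times> (\<Union>i\<le>m. S i))"
    then obtain t s where ts: "t \<in> S m" "s \<in> (\<Union>i\<le>m. S i)" and x: "x = f (t, s)" by auto
    obtain rs where s: "s = Node rs" by (cases s)
    from ts s have al: "alpha_tree t" "alpha_tree (Node rs)" "len (Node rs) \<le> len t" "len t = m"
      unfolding S_def by auto
    have "x = Node (t # rs)" using x s by (simp add: f_def)
    then show "x \<in> S (Suc m)" using al len_cons[OF al(3)] using alpha_cons[of t rs] unfolding S_def by auto
  qed
qed

lemma S_disj: "i \<noteq> j \<Longrightarrow> S i \<inter> S j = {}"
  unfolding S_def by auto

lemma S_fin: "finite (S k)"
proof (induction k rule: less_induct)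
  case (less k)
  show ?case
  proof (cases k)
    case 0 then show ?thesis by (simp add: S0)
  next
    case (Suc m)
    then have "finite (S m)" "\<forall>i\<le>m. finite (S i)" using less by auto
    then show ?thesis unfolding Suc S_Suc by auto
  qed
qed

lemma rec: "numA (Suc m) = numA m * (\<Sum>i\<le>m. numA i)"
proof -
  have nA: "numA k = card (S k)" for k by (simp add: numA_def S_def)
  have "card (S (Suc m)) = card (S m \<times> (\<Union>i\<le>m. S i))"
    unfolding S_Suc by (rule card_image) (rule inj_on_subset[OF f_inj], simp)
  also have "\<dots> = card (S m) * card (\<Union>i\<le>m. S i)" by (simp add: card_cartesian_product)
  also have "card (\<Union>i\<le>m. S i) = (\<Sum>i\<le>m. card (S i))"
    by (rule card_UN_disjoint) (auto simp: S_fin S_disj)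
  finally show ?thesis by (simp add: nA)
qed

lemma numA0: "numA 0 = 1"
  using S0 by (simp add: numA_def S_def[symmetric])

theorem mainTheorem5:
  shows "numA 0 = 1
    \<and> (\<forall>k\<ge>1. numA k = numA (k - 1) * (\<Sum>i = 0..k-1. numA i))
    \<and> numA 1 = 1 \<and> numA 2 = 2 \<and> numA 3 = 8 \<and> numA 4 = 96"
proof -
  have r: "\<forall>k\<ge>1. numA k = numA (k - 1) * (\<Sum>i = 0..k-1. numA i)"
  proof (intro allI impI)
    fix k :: nat assume "k \<ge> 1"
    then obtain m where k: "k = Suc m" by (cases k) auto
    have "{0..m} = {..m}" by auto
    then show "numA k = numA (k - 1) * (\<Sum>i = 0..k-1. numA i)" using rec[of m] k by simp
  qed
  have n1: "numA 1 = 1" using rec[of 0] numA0 by simp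
  have s1: "(\<Sum>i\<le>1. numA i) = 2" using n1 numA0 by simp
  have n2: "numA 2 = 2" using rec[of 1] n1 s1 by (simp add: numeral_2_eq_2)
  have s2: "(\<Sum>i\<le>2. numA i) = 4" using s1 n2 by (simp add: numeral_2_eq_2)
  have n3: "numA 3 = 8" using rec[of 2] n2 s2 by (simp add: numeral_3_eq_3)
  have e3: "(3::nat) = Suc 2" by simp
  have "(\<Sum>i\<le>3. numA i) = (\<Sum>i\<le>2. numA i) + numA 3"
    by (simp only: e3 sum.atMost_Suc)
  then have s3: "(\<Sum>i\<le>3. numA i) = 12" using s2 n3 by simp
  have e: "(4::nat) = Suc 3" by simp
  have "numA 4 = numA 3 * (\<Sum>i\<le>3. numA i)" by (simp only: e rec)
  then have n4: "numA 4 = 96" using n3 s3 by simp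
  show ?thesis using numA0 r n1 n2 n3 n4 by simp
qed

end
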